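(* Let $(\mathcal{F}_\alpha)_{\alpha<\omega_1}$ be a transfinite family. For every $\alpha<\omega_1$ and every infinite $L\subset\mathbb{N}$, $\mathbb{I}(\mathcal{F}_\alpha,L)=\alpha$.
   Context: An approximating family assigns to each countable limit ordinal $\alpha$ finite sets $A_n(\alpha)\subset[0,\alpha)$, $n\in\mathbb{N}$, with $A_n(\alpha)\subset A_{n+1}(\alpha)$ and $\lim_n\max A_n(\alpha)=\alpha$. The transfinite family it defines: $\mathcal{F}_0=\{\emptyset\}$; $\mathcal{F}_{\beta+1}=\{\{n\}\cup E:n\in\mathbb{N},E\in\mathcal{F}_\beta\}\cup\{\emptyset\}$; for limit $\alpha$, $\mathcal{F}_\alpha=\{\emptyset\}\cup\{E\ne\emptyset:E\in\bigcup_{\beta\in A_{\min E}(\alpha)}\mathcal{F}_\beta\}$. For $N=\{n_1<n_2<\dots\}$, $\mathcal{F}^N=\{\{n_i:i\in E\}:E\in\mathcal{F}\}$. A hereditary set $\mathcal{A}$ of finite subsets of $\mathbb{N}$ is $\alpha$-large on an infinite $P$ if for every infinite $M\subset P$ there is an infinite $N\subset M$ with $\mathcal{F}_\alpha^N\subset\mathcal{A}$ (independent of the approximating family); $\mathbb{I}(\mathcal{A},P)=\sup\{\alpha<\omega_1:\mathcal{A}\text{ is }\alpha\text{-large on }P\}$. *)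

theory Defs
  imports Main "HOL-Library.Countable_Set" "HOL-Library.Infinite_Set"
begin

text \<open>Countable ordinals are modelled as elements of a well-ordered type 'o all of whose
  proper initial segments are countable (i.e. 'o is order-isomorphic to an ordinal
  \<le> omega_1).  Natural numbers are the HOL type nat (starting at 0).\<close>

definition countable_ordinals :: "('o::wellorder) itself \<Rightarrow> bool" where
  "countable_ordinals _ \<longleftrightarrow> (\<forall>x::'o. countable {..<x})"

definition is_zero_ord :: "'o::wellorder \<Rightarrow> bool" where
  "is_zero_ord a \<longleftrightarrow> (\<forall>b. \<not> b < a)"

definition is_succ_of :: "'o::wellorder \<Rightarrow> 'o \<Rightarrow> bool" where
  "is_succ_of a b \<longleftrightarrow> b < a \<and> (\<forall>c. \<not> (b < c \<and> c < a))"

definition is_limit_ord :: "'o::wellorder \<Rightarrow> bool" where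
  "is_limit_ord a \<longleftrightarrow> \<not> is_zero_ord a \<and> (\<forall>b. \<not> is_succ_of a b)"

text \<open>Approximating family: A a n = A_n(a) for limit a.  The condition
  lim_n max A_n(a) = a is rendered as cofinality (A_n increasing, contained in [0,a)).\<close>
definition approximating_family :: "('o::wellorder \<Rightarrow> nat \<Rightarrow> 'o set) \<Rightarrow> bool" where
  "approximating_family A \<longleftrightarrow>
     (\<forall>a. is_limit_ord a \<longrightarrow>
        (\<forall>n. finite (A a n) \<and> A a n \<subseteq> {..<a} \<and> A a n \<subseteq> A a (Suc n)) \<and>
        (\<forall>b<a. \<exists>n. \<exists>c\<in>A a n. b \<le> c))"

definition transfinite_family ::
    "('o::wellorder \<Rightarrow> nat \<Rightarrow> 'o set) \<Rightarrow> ('o \<Rightarrow> nat set set) \<Rightarrow> bool" where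
  "transfinite_family A F \<longleftrightarrow>
     (\<forall>a. is_zero_ord a \<longrightarrow> F a = {{}}) \<and>
     (\<forall>a b. is_succ_of a b \<longrightarrow> F a = {insert n E | n E. E \<in> F b} \<union> {{}}) \<and>
     (\<forall>a. is_limit_ord a \<longrightarrow>
        F a = {{}} \<union> {E. E \<noteq> {} \<and> E \<in> (\<Union>b\<in>A a (Min E). F b)})"

text \<open>F^N, where enumerate N is the increasing enumeration n_0 < n_1 < ... of N.\<close>
definition fam_on :: "nat set set \<Rightarrow> nat set \<Rightarrow> nat set set" where
  "fam_on \<F> N = (\<lambda>E. enumerate N ` E) ` \<F>"

definition is_large :: "('o::wellorder \<Rightarrow> nat set set) \<Rightarrow> 'o \<Rightarrow> nat set set \<Rightarrow> nat set \<Rightarrow> bool" where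
  "is_large F a \<A> P \<longleftrightarrow>
     (\<forall>M. M \<subseteq> P \<and> infinite M \<longrightarrow> (\<exists>N. N \<subseteq> M \<and> infinite N \<and> fam_on (F a) N \<subseteq> \<A>))"

definition index_eq :: "('o::wellorder \<Rightarrow> nat set set) \<Rightarrow> nat set set \<Rightarrow> nat set \<Rightarrow> 'o \<Rightarrow> bool" where
  "index_eq F \<A> P a \<longleftrightarrow>
     (\<forall>b. is_large F b \<A> P \<longrightarrow> b \<le> a) \<and>
     (\<forall>c. (\<forall>b. is_large F b \<A> P \<longrightarrow> b \<le> c) \<longrightarrow> a \<le> c)"

end

theory Submission
  imports Defs
begin

inductive rk :: "nat set set \<Rightarrow> nat set \<Rightarrow> 'o::wellorder \<Rightarrow> bool" for G where
  rkI: "E \<in> G \<Longrightarrow> (\<forall>c<b. \<forall>k. \<exists>n>k. rk G (insert n E) c) \<Longrightarrow> rk G E b"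

lemma rk_mem: "rk G E b \<Longrightarrow> E \<in> G"
  by (erule rk.cases) auto

lemma rk_children: "rk G E b \<Longrightarrow> c < b \<Longrightarrow> \<exists>n>k. rk G (insert n E) c"
  by (erule rk.cases) auto

lemma rk_down: "rk G E b \<Longrightarrow> c \<le> b \<Longrightarrow> rk G E c"
proof (erule rk.cases)
  fix E' b' assume "c \<le> b" "E = E'" "b = b'" "E' \<in> G" "\<forall>c<b'. \<forall>k. \<exists>n>k. rk G (insert n E') c"
  then show "rk G E c" by (intro rk.rkI) (auto dest: less_le_trans)
qed

lemma rk_mono: "rk G E b \<Longrightarrow> G \<subseteq> G' \<longrightarrow> rk G' E b"
proof (induction rule: rk.induct)
  case (rkI E b)
  show ?case
  proof
    assume "G \<subseteq> G'"
    then show "rk G' E b" using rkI by (intro rk.rkI) blast+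
  qed
qed

lemma rk_sup:
  "rk G E b \<Longrightarrow> finite E \<longrightarrow>
     (\<forall>X. E \<subseteq> X \<longrightarrow> (\<forall>x\<in>X-E. \<forall>e\<in>E. e<x) \<longrightarrow> X \<in> G \<longrightarrow> X \<in> G') \<longrightarrow> rk G' E b"
proof (induction rule: rk.induct)
  case (rkI E b)
  show ?case
  proof (intro impI)
    assume fin: "finite E" and H: "\<forall>X. E \<subseteq> X \<longrightarrow> (\<forall>x\<in>X-E. \<forall>e\<in>E. e<x) \<longrightarrow> X \<in> G \<longrightarrow> X \<in> G'"
    show "rk G' E b"
    proof (rule rk.rkI)
      show "E \<in> G'" using H rkI.hyps(1) by blast
      show "\<forall>c<b. \<forall>k. \<exists>n>k. rk G' (insert n E) c"
      proof (intro allI impI)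
        fix c k assume "c < b"
        define k' where "k' = max k (if E = {} then 0 else Max E)"
        obtain n where n1: "n > k'" and n23: "rk G (insert n E) c \<and> (finite (insert n E) \<longrightarrow> (\<forall>X. insert n E \<subseteq> X \<longrightarrow> (\<forall>x\<in>X - insert n E. \<forall>e\<in>insert n E. e < x)
             \<longrightarrow> X \<in> G \<longrightarrow> X \<in> G') \<longrightarrow> rk G' (insert n E) c)"
          using rkI.IH[rule_format, OF \<open>c<b\<close>, of k'] by (elim exE conjE) (rule that, assumption, simp)
        note n = n1 conjunct1[OF n23] conjunct2[OF n23]
        have ne: "\<forall>e\<in>E. e < n"
        proof
          fix e assume "e \<in> E"
          then have "e \<le> Max E" using fin by simp
          then show "e < n" using n(1) \<open>e\<in>E\<close> unfolding k'_def by (auto split: if_splits)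
        qed
        have "\<forall>X. insert n E \<subseteq> X \<longrightarrow> (\<forall>x\<in>X - insert n E. \<forall>e\<in>insert n E. e < x)
             \<longrightarrow> X \<in> G \<longrightarrow> X \<in> G'"
        proof (intro allI impI)
          fix X assume a: "insert n E \<subseteq> X" "\<forall>x\<in>X - insert n E. \<forall>e\<in>insert n E. e < x" "X \<in> G"
          have "\<forall>x\<in>X-E. \<forall>e\<in>E. e<x" using a(2) ne by auto
          then show "X \<in> G'" using H a by blast
        qed
        then have "rk G' (insert n E) c" using n(3) fin by simp
        moreover have "n > k" using n(1) unfolding k'_def by simp
        ultimately show "\<exists>n>k. rk G' (insert n E) c" by blast
      qed
    qed
  qed
qed

lemma rk_embed: "rk G E b \<Longrightarrow> infinite N \<longrightarrow> rk (fam_on G N) (enumerate N ` E) b"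
proof (induction rule: rk.induct)
  case (rkI E b)
  show ?case
  proof
    assume N: "infinite N"
    show "rk (fam_on G N) (enumerate N ` E) b"
    proof (rule rk.rkI)
      show "enumerate N ` E \<in> fam_on G N" using rkI.hyps(1) unfolding fam_on_def by blast
      show "\<forall>c<b. \<forall>k. \<exists>n>k. rk (fam_on G N) (insert n (enumerate N ` E)) c"
      proof (intro allI impI)
        fix c k assume "c<b"
        then obtain n where "n > k" and "rk G (insert n E) c \<and> (infinite N \<longrightarrow> rk (fam_on G N) (enumerate N ` insert n E) c)"
          using rkI.IH[rule_format, of c k] by blast
        then have "n > k" "rk (fam_on G N) (enumerate N ` insert n E) c" using N by auto
        moreover have "n \<le> enumerate N n" using le_enumerate[OF N] .
        ultimately show "\<exists>n>k. rk (fam_on G N) (insert n (enumerate N ` E)) c"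
          by (intro exI[of _ "enumerate N n"]) auto
      qed
    qed
  qed
qed

lemma rk_union:
  assumes h1: "\<And>X Y. X \<in> G1 \<Longrightarrow> Y \<subseteq> X \<Longrightarrow> Y \<in> G1"
    and h2: "\<And>X Y. X \<in> G2 \<Longrightarrow> Y \<subseteq> X \<Longrightarrow> Y \<in> G2"
  shows "rk (G1 \<union> G2) E b \<Longrightarrow> rk G1 E b \<or> rk G2 E b"
proof (induction b arbitrary: E rule: less_induct)
  case (less b E)
  have mem: "E \<in> G1 \<union> G2" using less.prems rk_mem by blast
  define C1 where "C1 = {c. c<b \<and> (\<forall>k. \<exists>n>k. rk G1 (insert n E) c)}"
  define C2 where "C2 = {c. c<b \<and> (\<forall>k. \<exists>n>k. rk G2 (insert n E) c)}"
  have ch: "c \<in> C1 \<or> c \<in> C2" if "c < b" for c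
  proof -
    have "\<forall>k. \<exists>n>k. rk G1 (insert n E) c \<or> rk G2 (insert n E) c"
    proof
      fix k
      obtain n where "n>k" "rk (G1 \<union> G2) (insert n E) c" using rk_children[OF less.prems \<open>c<b\<close>] by blast
      then show "\<exists>n>k. rk G1 (insert n E) c \<or> rk G2 (insert n E) c" using less.IH[OF \<open>c<b\<close>] by blast
    qed
    then have "infinite {n. rk G1 (insert n E) c \<or> rk G2 (insert n E) c}"
      unfolding infinite_nat_iff_unbounded mem_Collect_eq .
    then have "infinite ({n. rk G1 (insert n E) c} \<union> {n. rk G2 (insert n E) c})"
      by (simp add: Collect_disj_eq)
    then have "infinite {n. rk G1 (insert n E) c} \<or> infinite {n. rk G2 (insert n E) c}"
      by simp
    then show ?thesis unfolding C1_def C2_def infinite_nat_iff_unbounded mem_Collect_eq using \<open>c<b\<close> by blast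
  qed
  have d1: "c' \<in> C1" if "c \<in> C1" "c' \<le> c" for c c'
  proof -
    have cb: "c < b" and ch1: "\<forall>k. \<exists>n>k. rk G1 (insert n E) c"
      using that(1) unfolding C1_def by simp_all
    have "c' < b" using le_less_trans[OF that(2) cb] .
    moreover have "\<forall>k. \<exists>n>k. rk G1 (insert n E) c'"
    proof
      fix k
      obtain n where "n>k" "rk G1 (insert n E) c" using ch1 by blast
      then show "\<exists>n>k. rk G1 (insert n E) c'" using rk_down[OF _ that(2)] by blast
    qed
    ultimately show ?thesis unfolding C1_def by (intro CollectI conjI)
  qed
  have d2: "c' \<in> C2" if "c \<in> C2" "c' \<le> c" for c c'
  proof -
    have cb: "c < b" and ch1: "\<forall>k. \<exists>n>k. rk G2 (insert n E) c"
      using that(1) unfolding C2_def by simp_all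
    have "c' < b" using le_less_trans[OF that(2) cb] .
    moreover have "\<forall>k. \<exists>n>k. rk G2 (insert n E) c'"
    proof
      fix k
      obtain n where "n>k" "rk G2 (insert n E) c" using ch1 by blast
      then show "\<exists>n>k. rk G2 (insert n E) c'" using rk_down[OF _ that(2)] by blast
    qed
    ultimately show ?thesis unfolding C2_def by (intro CollectI conjI)
  qed
  show ?case
  proof (cases "\<exists>c. c<b")
    case False
    then have v: "\<forall>c<b. \<forall>k. \<exists>n>k. rk G (insert n E) c" for G by blast
    from mem have "E \<in> G1 \<or> E \<in> G2" by simp
    then show ?thesis
    proof
      assume "E \<in> G1" then have "rk G1 E b" using v by (rule rk.rkI)
      then show ?thesis ..
    next
      assume "E \<in> G2" then have "rk G2 E b" using v by (rule rk.rkI)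
      then show ?thesis ..
    qed
  next
    case True
    then obtain c0 where "c0 < b" by blast
    have g1: "rk G1 E b" if all: "\<forall>c<b. c \<in> C1"
    proof -
      obtain n where n: "rk G1 (insert n E) c0" using all \<open>c0<b\<close> unfolding C1_def by blast
      have "E \<in> G1" by (rule h1[OF rk_mem[OF n] subset_insertI])
      moreover have "\<forall>c<b. \<forall>k. \<exists>n>k. rk G1 (insert n E) c" using all unfolding C1_def by blast
      ultimately show ?thesis by (rule rk.rkI)
    qed
    have g2: "rk G2 E b" if all: "\<forall>c<b. c \<in> C2"
    proof -
      obtain n where n: "rk G2 (insert n E) c0" using all \<open>c0<b\<close> unfolding C2_def by blast
      have "E \<in> G2" by (rule h2[OF rk_mem[OF n] subset_insertI])
      moreover have "\<forall>c<b. \<forall>k. \<exists>n>k. rk G2 (insert n E) c" using all unfolding C2_def by blast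
      ultimately show ?thesis by (rule rk.rkI)
    qed
    show ?thesis
    proof (rule ccontr)
      assume "\<not> ?thesis"
      then obtain c1 c2 where c: "c1 < b" "c1 \<notin> C1" "c2 < b" "c2 \<notin> C2" using g1 g2 by blast
      show False
      proof (cases "c1 \<le> c2")
        case True
        then show False using c ch[of c2] d1[of c2 c1] by blast
      next
        case False
        then have "c2 \<le> c1" by simp
        then show False using c ch[of c1] d2[of c1 c2] by blast
      qed
    qed
  qed
qed


lemma ord_cases:
  fixes a :: "'o::wellorder"
  obtains "is_zero_ord a" | b where "is_succ_of a b" | "is_limit_ord a"
  unfolding is_limit_ord_def by blast

lemma succ_lt: "is_succ_of a b \<Longrightarrow> b < a"
  by (simp add: is_succ_of_def)

lemma succ_le: "is_succ_of a b \<Longrightarrow> c < a \<Longrightarrow> c \<le> (b::'o::wellorder)"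
  unfolding is_succ_of_def using not_less by blast

lemma zero_nlt: "is_zero_ord a \<Longrightarrow> \<not> c < a"
  by (simp add: is_zero_ord_def)

lemma lim_between: "is_limit_ord a \<Longrightarrow> c < a \<Longrightarrow> \<exists>d. c < d \<and> d < (a::'o::wellorder)"
  unfolding is_limit_ord_def is_succ_of_def by blast

locale TF =
  fixes A :: "'o::wellorder \<Rightarrow> nat \<Rightarrow> 'o set" and F :: "'o \<Rightarrow> nat set set"
  assumes af: "approximating_family A" and tf: "transfinite_family A F"
begin

lemma tf': "(\<forall>a. is_zero_ord a \<longrightarrow> F a = {{}}) \<and>
     (\<forall>a b. is_succ_of a b \<longrightarrow> F a = {insert n E | n E. E \<in> F b} \<union> {{}}) \<and>
     (\<forall>a. is_limit_ord a \<longrightarrow>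
        F a = {{}} \<union> {E. E \<noteq> {} \<and> E \<in> (\<Union>b\<in>A a (Min E). F b)})"
  using tf unfolding transfinite_family_def .

lemma F_zero: "is_zero_ord a \<Longrightarrow> F a = {{}}"
  by (rule conjunct1[OF tf', rule_format])

lemma F_succ: "is_succ_of a b \<Longrightarrow> F a = {insert n E | n E. E \<in> F b} \<union> {{}}"
  by (rule conjunct1[OF conjunct2[OF tf'], rule_format])

lemma F_lim: "is_limit_ord a \<Longrightarrow> F a = {{}} \<union> {E. E \<noteq> {} \<and> E \<in> (\<Union>b\<in>A a (Min E). F b)}"
  by (rule conjunct2[OF conjunct2[OF tf'], rule_format])

lemma af': "is_limit_ord a \<Longrightarrow>
        (\<forall>n. finite (A a n) \<and> A a n \<subseteq> {..<a} \<and> A a n \<subseteq> A a (Suc n)) \<and>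
        (\<forall>b<a. \<exists>n. \<exists>c\<in>A a n. b \<le> c)"
  using af unfolding approximating_family_def by (elim allE impE) 

lemma A_sub: "is_limit_ord a \<Longrightarrow> c \<in> A a n \<Longrightarrow> c < a"
proof -
  assume "is_limit_ord a" "c \<in> A a n"
  then have "A a n \<subseteq> {..<a}" using af' by blast
  then show "c < a" using \<open>c \<in> A a n\<close> by auto
qed

lemma A_mono: "is_limit_ord a \<Longrightarrow> n \<le> m \<Longrightarrow> A a n \<subseteq> A a m"
proof -
  assume l: "is_limit_ord a" and "n \<le> m"
  have "\<And>k. A a k \<subseteq> A a (Suc k)" using af'[OF l] by blast
  then show ?thesis using lift_Suc_mono_le[of "A a", OF _ \<open>n \<le> m\<close>] by blast
qed

lemma A_cof: "is_limit_ord a \<Longrightarrow> b < a \<Longrightarrow> \<exists>n. \<exists>c\<in>A a n. b \<le> c"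
  using af' by blast

lemma succ_in: "is_succ_of a b \<Longrightarrow> E \<in> F b \<Longrightarrow> insert n E \<in> F a"
  by (subst F_succ) auto

lemma succ_out: "is_succ_of a b \<Longrightarrow> X \<in> F a \<Longrightarrow> X \<noteq> {} \<Longrightarrow> \<exists>n E. X = insert n E \<and> E \<in> F b"
  by (subst (asm) F_succ) auto

lemma lim_in: "is_limit_ord a \<Longrightarrow> E \<noteq> {} \<Longrightarrow> c \<in> A a (Min E) \<Longrightarrow> E \<in> F c \<Longrightarrow> E \<in> F a"
  by (subst F_lim) auto

lemma lim_out: "is_limit_ord a \<Longrightarrow> E \<in> F a \<Longrightarrow> E \<noteq> {} \<Longrightarrow> \<exists>c\<in>A a (Min E). E \<in> F c"
  by (subst (asm) F_lim) auto

lemma F_empty: "{} \<in> F a"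
proof (cases a rule: ord_cases)
  case 1 then show ?thesis by (simp add: F_zero)
next
  case (2 b) then show ?thesis by (subst F_succ) auto
next
  case 3 then show ?thesis by (subst F_lim) auto
qed

lemma F_fin: "X \<in> F a \<Longrightarrow> finite X"
proof (induction a arbitrary: X rule: less_induct)
  case (less a X)
  show ?case
  proof (cases "X = {}")
    case True then show ?thesis by simp
  next
    case XF: False
    show ?thesis
    proof (cases a rule: ord_cases)
      case 1 then have "F a = {{}}" by (rule F_zero)
      then show ?thesis using less.prems XF by simp
    next
      case (2 b)
      obtain n E where nE: "X = insert n E" "E \<in> F b" using succ_out[OF 2 less.prems XF] by blast
      have "finite E" by (rule less.IH[OF succ_lt[OF 2] nE(2)])
      then show ?thesis using nE(1) by simp
    next
      case 3
      obtain c where c: "c \<in> A a (Min X)" "X \<in> F c" using lim_out[OF 3 less.prems XF] by blast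
      show ?thesis by (rule less.IH[OF A_sub[OF 3 c(1)] c(2)])
    qed
  qed
qed

lemma A_Min: "is_limit_ord a \<Longrightarrow> finite X \<Longrightarrow> X \<noteq> {} \<Longrightarrow> (\<forall>y\<in>Y. Min X \<le> y) \<Longrightarrow> finite Y \<Longrightarrow> Y \<noteq> {}
   \<Longrightarrow> A a (Min X) \<subseteq> A a (Min Y)"
proof -
  assume l: "is_limit_ord a" and h: "\<forall>y\<in>Y. Min X \<le> y" "finite Y" "Y \<noteq> {}"
  have "Min Y \<in> Y" using h(2,3) by (rule Min_in)
  then have "Min X \<le> Min Y" using h(1) by blast
  then show ?thesis by (rule A_mono[OF l])
qed

lemma F_hered: "X \<in> F a \<Longrightarrow> Y \<subseteq> X \<Longrightarrow> Y \<in> F a"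
proof (induction a arbitrary: X Y rule: less_induct)
  case (less a X Y)
  show ?case
  proof (cases "Y = {}")
    case True then show ?thesis using F_empty by simp
  next
    case YF: False
    have XF: "X \<noteq> {}" using less.prems(2) YF by auto
    show ?thesis
    proof (cases a rule: ord_cases)
      case 1 then have "F a = {{}}" by (rule F_zero)
      then show ?thesis using less.prems XF by simp
    next
      case (2 b)
      obtain n E where XE: "X = insert n E" "E \<in> F b" using succ_out[OF 2 less.prems(1) XF] by blast
      note IH = less.IH[OF succ_lt[OF 2] XE(2)]
      show ?thesis
      proof (cases "n \<in> Y")
        case True
        then have Yeq: "Y = insert n (Y - {n})" by auto
        have "Y - {n} \<subseteq> E" using less.prems(2) XE(1) by auto
        then have "Y - {n} \<in> F b" by (rule IH)
        then have "insert n (Y - {n}) \<in> F a" by (rule succ_in[OF 2])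
        then show ?thesis using Yeq by simp
      next
        case False
        then have "Y \<subseteq> E" using less.prems(2) XE(1) by auto
        then have YB: "Y \<in> F b" by (rule IH)
        obtain y where "y \<in> Y" using YF by auto
        have "insert y Y \<in> F a" using YB by (rule succ_in[OF 2])
        then show ?thesis using \<open>y \<in> Y\<close> by (simp add: insert_absorb)
      qed
    next
      case 3
      obtain c where c: "c \<in> A a (Min X)" "X \<in> F c" using lim_out[OF 3 less.prems(1) XF] by blast
      have fX: "finite X" using F_fin[OF less.prems(1)] .
      have fY: "finite Y" using finite_subset[OF less.prems(2) fX] .
      have Yc: "Y \<in> F c" by (rule less.IH[OF A_sub[OF 3 c(1)] c(2) less.prems(2)])
      have "\<forall>y\<in>Y. Min X \<le> y" using less.prems(2) fX by auto
      then have "A a (Min X) \<subseteq> A a (Min Y)" using A_Min[OF 3 fX XF _ fY YF] by blast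
      then have "c \<in> A a (Min Y)" using c(1) by blast
      then show ?thesis by (rule lim_in[OF 3 YF _ Yc])
    qed
  qed
qed

lemma F_replace: "X \<in> F a \<Longrightarrow> x \<in> X \<Longrightarrow> y \<notin> X \<Longrightarrow> x < y \<Longrightarrow> insert y (X - {x}) \<in> F a"
proof (induction a arbitrary: X rule: less_induct)
  case (less a X)
  have XF: "X \<noteq> {}" using less.prems(2) by auto
  show ?case
  proof (cases a rule: ord_cases)
    case 1 then have "F a = {{}}" by (rule F_zero)
    then show ?thesis using less.prems XF by simp
  next
    case (2 b)
    obtain n Z where XZ: "X = insert n Z" "Z \<in> F b" using succ_out[OF 2 less.prems(1) XF] by blast
    note IH = less.IH[OF succ_lt[OF 2]]
    show ?thesis
    proof (cases "x = n")
      case True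
      show ?thesis
      proof (cases "n \<in> Z")
        case False
        then have "insert y (X - {x}) = insert y Z" using XZ(1) True by auto
        moreover have "insert y Z \<in> F a" by (rule succ_in[OF 2 XZ(2)])
        ultimately show ?thesis by simp
      next
        case nZ: True
        then have XZ': "X = Z" using XZ(1) by auto
        have R: "insert y (X - {x}) \<in> F b" using IH[OF XZ(2)] less.prems(2-4) XZ' by simp
        have "insert y (insert y (X - {x})) \<in> F a" by (rule succ_in[OF 2 R])
        then show ?thesis by simp
      qed
    next
      case False
      have xZ: "x \<in> Z" using less.prems(2) XZ(1) False by auto
      have yZ: "y \<notin> Z" using less.prems(3) XZ(1) by auto
      have R: "insert y (Z - {x}) \<in> F b" by (rule IH[OF XZ(2) xZ yZ less.prems(4)])
      have eq: "insert y (X - {x}) = insert n (insert y (Z - {x}))" using XZ(1) False by auto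
      have "insert n (insert y (Z - {x})) \<in> F a" by (rule succ_in[OF 2 R])
      then show ?thesis using eq by simp
    qed
  next
    case 3
    obtain c where c: "c \<in> A a (Min X)" "X \<in> F c" using lim_out[OF 3 less.prems(1) XF] by blast
    have fX: "finite X" using F_fin[OF less.prems(1)] .
    have Rc: "insert y (X - {x}) \<in> F c"
      by (rule less.IH[OF A_sub[OF 3 c(1)] c(2) less.prems(2-4)])
    have mx: "Min X \<le> x" using fX less.prems(2) by simp
    have "\<forall>r\<in>insert y (X - {x}). Min X \<le> r"
    proof
      fix r assume r: "r \<in> insert y (X - {x})"
      show "Min X \<le> r"
      proof (cases "r = y")
        case True then show ?thesis using mx less.prems(4) by simp
      next
        case False then have "r \<in> X" using r by auto
        then show ?thesis using fX by simp
      qed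
    qed
    then have "A a (Min X) \<subseteq> A a (Min (insert y (X - {x})))"
      using A_Min[OF 3 fX XF] fX by simp
    then have "c \<in> A a (Min (insert y (X - {x})))" using c(1) by blast
    then show ?thesis using lim_in[OF 3 _ _ Rc] by simp
  qed
qed

lemma min_out: "is_succ_of a b \<Longrightarrow> E \<in> F a \<Longrightarrow> E \<noteq> {} \<Longrightarrow> E - {Min E} \<in> F b"
proof -
  assume s: "is_succ_of a b" and E: "E \<in> F a" "E \<noteq> {}"
  obtain n Z where EZ: "E = insert n Z" "Z \<in> F b" using succ_out[OF s E] by blast
  have fE: "finite E" using F_fin[OF E(1)] .
  have mE: "Min E \<in> E" using fE E(2) by (rule Min_in)
  show ?thesis
  proof (cases "n = Min E \<or> n \<in> Z")
    case True
    then have "E - {Min E} \<subseteq> Z" using EZ(1) by auto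
    then show ?thesis by (rule F_hered[OF EZ(2)])
  next
    case False
    have m1: "Min E \<in> Z" using mE EZ(1) False by auto
    have "Min E \<le> n" using fE EZ(1) by simp
    then have m2: "Min E < n" using False by simp
    have m3: "n \<notin> Z" using False by simp
    have "insert n (Z - {Min E}) \<in> F b" by (rule F_replace[OF EZ(2) m1 m3 m2])
    moreover have "insert n (Z - {Min E}) = E - {Min E}" using EZ(1) False by auto
    ultimately show ?thesis by simp
  qed
qed

lemma F_spread: "strict_mono g \<Longrightarrow> (\<And>i. i \<le> g i) \<Longrightarrow> E \<in> F a \<Longrightarrow> g ` E \<in> F a"
proof (induction a arbitrary: E rule: less_induct)
  case (less a E)
  show ?case
  proof (cases "E = {}")
    case True then show ?thesis using F_empty by simp
  next
    case EF: False
    show ?thesis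
    proof (cases a rule: ord_cases)
      case 1 then have "F a = {{}}" by (rule F_zero)
      then show ?thesis using less.prems EF by simp
    next
      case (2 b)
      obtain n Z where EZ: "E = insert n Z" "Z \<in> F b" using succ_out[OF 2 less.prems(3) EF] by blast
      have "g ` Z \<in> F b" by (rule less.IH[OF succ_lt[OF 2] less.prems(1,2) EZ(2)])
      then have "insert (g n) (g ` Z) \<in> F a" by (rule succ_in[OF 2])
      then show ?thesis using EZ(1) by simp
    next
      case 3
      obtain c where c: "c \<in> A a (Min E)" "E \<in> F c" using lim_out[OF 3 less.prems(3) EF] by blast
      have fE: "finite E" using F_fin[OF less.prems(3)] .
      have gc: "g ` E \<in> F c" by (rule less.IH[OF A_sub[OF 3 c(1)] less.prems(1,2) c(2)])
      have "g (Min E) = Min (g ` E)"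
        using mono_Min_commute[OF strict_mono_mono[OF less.prems(1)] fE EF] .
      then have "Min E \<le> Min (g ` E)" using less.prems(2)[of "Min E"] by simp
      then have "A a (Min E) \<subseteq> A a (Min (g ` E))" by (rule A_mono[OF 3])
      then have "c \<in> A a (Min (g ` E))" using c(1) by blast
      then show ?thesis using lim_in[OF 3 _ _ gc] EF by simp
    qed
  qed
qed

lemma rk_UN: "finite S \<Longrightarrow> rk (\<Union>c\<in>S. F c) E b \<Longrightarrow> \<exists>c\<in>S. rk (F c) E b"
proof (induction S rule: finite_induct)
  case empty
  then have "E \<in> (\<Union>c\<in>{}. F c)" by (rule rk_mem)
  then show ?case by simp
next
  case (insert x S)
  have eq: "(\<Union>c\<in>insert x S. F c) = F x \<union> (\<Union>c\<in>S. F c)" by simp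
  have h1: "\<And>X Y. X \<in> F x \<Longrightarrow> Y \<subseteq> X \<Longrightarrow> Y \<in> F x" by (rule F_hered)
  have h2: "\<And>X Y. X \<in> (\<Union>c\<in>S. F c) \<Longrightarrow> Y \<subseteq> X \<Longrightarrow> Y \<in> (\<Union>c\<in>S. F c)"
    using F_hered by blast
  have "rk (F x \<union> (\<Union>c\<in>S. F c)) E b" using insert.prems eq by simp
  note U = rk_union[OF h1 h2 this]
  then have "rk (F x) E b \<or> rk (\<Union>c\<in>S. F c) E b" .
  then show ?case
  proof
    assume "rk (F x) E b" then show ?thesis by blast
  next
    assume "rk (\<Union>c\<in>S. F c) E b"
    then obtain c where "c \<in> S" "rk (F c) E b" using insert.IH by blast
    then show ?thesis by blast
  qed
qed

lemma S1:
  assumes s: "is_succ_of a a'"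
  shows "rk (F a) E b \<Longrightarrow> E \<noteq> {} \<longrightarrow> finite E \<longrightarrow> rk (F a') (E - {Min E}) b"
proof (induction rule: rk.induct)
  case (rkI E b)
  show ?case
  proof (intro impI)
    assume EF: "E \<noteq> {}" and fE: "finite E"
    show "rk (F a') (E - {Min E}) b"
    proof (rule rk.rkI)
      show "E - {Min E} \<in> F a'" by (rule min_out[OF s rkI.hyps EF])
      show "\<forall>c<b. \<forall>k. \<exists>n>k. rk (F a') (insert n (E - {Min E})) c"
      proof (intro allI impI)
        fix c k assume "c < b"
        define k' where "k' = max k (Max E)"
        obtain n where n1: "n > k'" and n2: "rk (F a) (insert n E) c \<and> (insert n E \<noteq> {} \<longrightarrow> finite (insert n E)
            \<longrightarrow> rk (F a') (insert n E - {Min (insert n E)}) c)"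
          using rkI.IH[rule_format, OF \<open>c<b\<close>, of k'] by (elim exE conjE) (rule that, assumption, simp)
        have r: "rk (F a') (insert n E - {Min (insert n E)}) c" using n2 fE by simp
        have mx: "Max E < n" using n1 unfolding k'_def by simp
        have "Min E \<le> Max E" using fE EF by simp
        then have mn: "Min E < n" using mx by simp
        have "Min (insert n E) = Min E" using fE EF mn by simp
        then have "insert n E - {Min (insert n E)} = insert n (E - {Min E})" using mn by auto
        then have "rk (F a') (insert n (E - {Min E})) c" using r by simp
        moreover have "n > k" using n1 unfolding k'_def by simp
        ultimately show "\<exists>n>k. rk (F a') (insert n (E - {Min E})) c" by blast
      qed
    qed
  qed
qed

lemma S2:
  assumes s: "is_succ_of a b"
  shows "rk (F b) X c \<Longrightarrow> \<forall>n. rk (F a) (insert n X) c"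
proof (induction rule: rk.induct)
  case (rkI X c)
  show ?case
  proof
    fix n
    show "rk (F a) (insert n X) c"
    proof (rule rk.rkI)
      show "insert n X \<in> F a" by (rule succ_in[OF s rkI.hyps])
      show "\<forall>c'<c. \<forall>k. \<exists>m>k. rk (F a) (insert m (insert n X)) c'"
      proof (intro allI impI)
        fix c' k assume "c' < c"
        obtain m where m1: "m > k" and m2: "\<forall>n. rk (F a) (insert n (insert m X)) c'"
          using rkI.IH[rule_format, OF \<open>c'<c\<close>, of k] by blast
        have "insert m (insert n X) = insert n (insert m X)" by (rule insert_commute)
        then have "rk (F a) (insert m (insert n X)) c'" using m2 by simp
        then show "\<exists>m>k. rk (F a) (insert m (insert n X)) c'" using m1 by blast
      qed
    qed
  qed
qed

lemma Q: "\<forall>E (b::'o). E \<noteq> {} \<longrightarrow> rk (F a) E b \<longrightarrow> b < a"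
proof (induction a rule: less_induct)
  case (less a)
  have emp: "b \<le> d" if r: "rk (F d) {} b" and "d < a" for d b
  proof (rule ccontr)
    assume "\<not> b \<le> d"
    then have "d < b" by simp
    obtain n where "n > 0" "rk (F d) (insert n {}) d" using rk_children[OF r \<open>d<b\<close>] by blast
    then have "d < d" using less.IH[OF \<open>d<a\<close>, rule_format, of "{n}" d] by simp
    then show False by simp
  qed
  show ?case
  proof (intro allI impI)
    fix E and b :: 'o assume EF: "E \<noteq> {}" and r: "rk (F a) E b"
    have Ea: "E \<in> F a" by (rule rk_mem[OF r])
    have fE: "finite E" by (rule F_fin[OF Ea])
    show "b < a"
    proof (cases a rule: ord_cases)
      case 1 then have "F a = {{}}" by (rule F_zero)
      then show ?thesis using Ea EF by simp
    next
      case (2 a')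
      have r': "rk (F a') (E - {Min E}) b" using S1[OF 2 r] EF fE by simp
      have aa: "a' < a" by (rule succ_lt[OF 2])
      show ?thesis
      proof (cases "E - {Min E} = {}")
        case True
        have "b \<le> a'" using emp[OF r'[unfolded True] aa] .
        then show ?thesis using aa by (rule le_less_trans)
      next
        case False
        have "b < a'" using less.IH[OF aa, rule_format, OF False r'] .
        then show ?thesis using aa by (rule less_trans)
      qed
    next
      case 3
      define S where "S = A a (Min E)"
      have cond: "\<forall>X. E \<subseteq> X \<longrightarrow> (\<forall>x\<in>X-E. \<forall>e\<in>E. e<x) \<longrightarrow> X \<in> F a \<longrightarrow> X \<in> (\<Union>c\<in>S. F c)"
      proof (intro allI impI)
        fix X assume X: "E \<subseteq> X" "\<forall>x\<in>X-E. \<forall>e\<in>E. e<x" "X \<in> F a"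
        have XF: "X \<noteq> {}" using X(1) EF by auto
        have fX: "finite X" by (rule F_fin[OF X(3)])
        have mX: "Min X \<in> X" using fX XF by (rule Min_in)
        have mE: "Min E \<in> E" using fE EF by (rule Min_in)
        have l1: "Min X \<le> Min E" using fX X(1) mE by auto
        have l2: "Min E \<le> Min X"
        proof (cases "Min X \<in> E")
          case True then show ?thesis using fE by simp
        next
          case False then have "Min E < Min X" using X(2) mX mE by blast
          then show ?thesis by simp
        qed
        have eqm: "Min X = Min E" using l1 l2 by simp
        obtain c where "c \<in> A a (Min X)" "X \<in> F c" using lim_out[OF 3 X(3) XF] by blast
        then show "X \<in> (\<Union>c\<in>S. F c)" unfolding S_def eqm by blast
      qed
      have rU: "rk (\<Union>c\<in>S. F c) E b" using rk_sup[OF r] fE cond by blast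
      have fS: "finite S" unfolding S_def using af'[OF 3] by blast
      obtain c where c: "c \<in> S" "rk (F c) E b" using rk_UN[OF fS rU] by blast
      have ca: "c < a" using A_sub[OF 3] c(1) unfolding S_def by blast
      have "b < c" using less.IH[OF ca, rule_format, OF EF c(2)] .
      then show ?thesis using ca by (rule less_trans)
    qed
  qed
qed

lemma Q_empty: "rk (F a) {} b \<Longrightarrow> b \<le> a"
proof (rule ccontr)
  assume r: "rk (F a) {} b" and "\<not> b \<le> a"
  then have "a < b" by simp
  obtain n where "n > 0" "rk (F a) (insert n {}) a" using rk_children[OF r \<open>a<b\<close>] by blast
  then have "a < a" using Q[rule_format, of "{n}" a a] by simp
  then show False by simp
qed

lemma P: "rk (F a) {} a"
proof (induction a rule: less_induct)
  case (less a)
  show ?case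
  proof (cases a rule: ord_cases)
    case 1
    have "\<forall>c<a. \<forall>k. \<exists>n>k. rk (F a) (insert n {}) c" using zero_nlt[OF 1] by blast
    with F_empty show ?thesis by (rule rk.rkI)
  next
    case (2 a')
    have aa: "a' < a" by (rule succ_lt[OF 2])
    have "\<forall>c<a. \<forall>k. \<exists>n>k. rk (F a) (insert n {}) c"
    proof (intro allI impI)
      fix c k assume "c < a"
      then have "c \<le> a'" by (rule succ_le[OF 2])
      then have "rk (F a') {} c" by (rule rk_down[OF less.IH[OF aa]])
      then have "rk (F a) (insert (Suc k) {}) c" using S2[OF 2] by blast
      then show "\<exists>n>k. rk (F a) (insert n {}) c" by (intro exI[of _ "Suc k"]) simp
    qed
    with F_empty show ?thesis by (rule rk.rkI)
  next
    case 3
    have "\<forall>c<a. \<forall>k. \<exists>n>k. rk (F a) (insert n {}) c"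
    proof (intro allI impI)
      fix c k assume "c < a"
      obtain d where d: "c < d" "d < a" using lim_between[OF 3 \<open>c<a\<close>] by blast
      obtain n0 c' where c': "c' \<in> A a n0" "d \<le> c'" using A_cof[OF 3 d(2)] by blast
      have ca: "c' < a" by (rule A_sub[OF 3 c'(1)])
      have cc: "c < c'" using d(1) c'(2) by (rule less_le_trans)
      obtain n where n: "n > max k n0" "rk (F c') (insert n {}) c"
        using rk_children[OF less.IH[OF ca] cc] by blast
      have cond: "\<forall>X. {n} \<subseteq> X \<longrightarrow> (\<forall>x\<in>X-{n}. \<forall>e\<in>{n}. e<x) \<longrightarrow> X \<in> F c' \<longrightarrow> X \<in> F a"
      proof (intro allI impI)
        fix X assume X: "{n} \<subseteq> X" "\<forall>x\<in>X-{n}. \<forall>e\<in>{n}. e<x" "X \<in> F c'"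
        have XF: "X \<noteq> {}" using X(1) by auto
        have fX: "finite X" by (rule F_fin[OF X(3)])
        have "Min X = n"
        proof (rule Min_eqI[OF fX])
          show "n \<in> X" using X(1) by auto
          fix y assume y: "y \<in> X"
          show "n \<le> y"
          proof (cases "y = n")
            case False
            then have "y \<in> X - {n}" using y by simp
            then have "n < y" using X(2) by blast
            then show ?thesis by simp
          qed simp
        qed
        moreover have "A a n0 \<subseteq> A a n" using n(1) by (intro A_mono[OF 3]) simp
        ultimately have "c' \<in> A a (Min X)" using c'(1) by auto
        then show "X \<in> F a" by (rule lim_in[OF 3 XF _ X(3)])
      qed
      have "rk (F a) {n} c" using rk_sup[OF n(2)] cond by simp
      moreover have "n > k" using n(1) by simp
      ultimately show "\<exists>n>k. rk (F a) (insert n {}) c" by auto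
    qed
    with F_empty show ?thesis by (rule rk.rkI)
  qed
qed

end

theorem corollary4:
  fixes A :: "'o::wellorder \<Rightarrow> nat \<Rightarrow> 'o set"
    and F :: "'o \<Rightarrow> nat set set"
    and a :: 'o and L :: "nat set"
  assumes "countable_ordinals TYPE('o)"
    and "approximating_family A"
    and "transfinite_family A F"
    and "infinite L"
  shows "index_eq F (F a) L a"
proof -
  interpret TF A F using assms(2,3) by unfold_locales
  show ?thesis unfolding index_eq_def
  proof (intro conjI allI impI)
    fix b assume "is_large F b (F a) L"
    then obtain N where N: "N \<subseteq> L" "infinite N" "fam_on (F b) N \<subseteq> F a"
      using assms(4) unfolding is_large_def by blast
    have "rk (F b) {} b" by (rule P)
    then have "rk (fam_on (F b) N) (enumerate N ` {}) b" using rk_embed N(2) by blast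
    then have "rk (F a) {} b" using rk_mono[rule_format, OF _ N(3)] by simp
    then show "b \<le> a" by (rule Q_empty)
  next
    fix c assume h: "\<forall>b. is_large F b (F a) L \<longrightarrow> b \<le> c"
    have "is_large F a (F a) L" unfolding is_large_def
    proof (intro allI impI)
      fix M assume M: "M \<subseteq> L \<and> infinite M"
      have "fam_on (F a) M \<subseteq> F a" unfolding fam_on_def
      proof
        fix Y assume "Y \<in> (\<lambda>E. enumerate M ` E) ` F a"
        then obtain E where "E \<in> F a" "Y = enumerate M ` E" by blast
        then show "Y \<in> F a" using F_spread[OF strict_mono_enumerate le_enumerate] M by blast
      qed
      then show "\<exists>N. N \<subseteq> M \<and> infinite N \<and> fam_on (F a) N \<subseteq> F a" using M by blast
    qed
    then show "a \<le> c" using h by blast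
  qed
qed

end
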